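(* $$\sum_{n=0}^\infty \frac{\binom{2n}{n}}{(2n+1)(n+1)^2\, 2^{2n}} = 2\pi + 4\log 2 - 8.$$
   Context: $\binom{2n}{n}$ is the central binomial coefficient; $\log$ is the natural logarithm. *)

theory Defs
  imports Complex_Main
begin

end

theory Submission imports Defs "HOL-Analysis.Analysis" begin

definition cb :: "nat \<Rightarrow> real" where "cb n = real ((2*n) choose n) / 4^n"

lemma cb_Suc: "cb (Suc n) = cb n * (2*n+1) / (2*n+2)"
proof -
  have a: "Suc (Suc (2*n)) * (Suc (2*n) choose n) = (Suc (Suc (2*n)) choose Suc n) * Suc n"
    using Suc_times_binomial_eq[of "Suc (2*n)" n] by simp
  have b: "Suc (2*n) * ((2*n) choose n) = (Suc (2*n) choose Suc n) * Suc n"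
    using Suc_times_binomial_eq[of "2*n" n] by simp
  have c: "(Suc (2*n) choose Suc n) = (Suc (2*n) choose n)"
    using binomial_symmetric[of "Suc n" "Suc (2*n)"] by simp
  have dn: "(Suc (Suc (2*n)) choose Suc n) * Suc n * Suc n = Suc (Suc (2*n)) * (Suc (2*n) * ((2*n) choose n))"
    by (metis a b c mult.assoc mult.commute)
  have d: "real (Suc (Suc (2*n)) choose Suc n) * (real n+1) * (real n+1) = (2*n+2)*(2*n+1) * real ((2*n) choose n)"
    using arg_cong[OF dn, of real] by (simp only: of_nat_mult of_nat_Suc) (simp add: algebra_simps)
  have e: "2 * Suc n = Suc (Suc (2*n))" by simp
  have f: "real (Suc (Suc (2*n)) choose Suc n) = (2*n+2)*(2*n+1) * real ((2*n) choose n) / ((real n+1)*(real n+1))"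
  proof -
    have Y: "(real n+1)*(real n+1) \<noteq> 0" by (metis add_nonneg_pos mult_eq_0_iff of_nat_0_le_iff zero_less_one less_irrefl)
    have "real (Suc (Suc (2*n)) choose Suc n) = real (Suc (Suc (2*n)) choose Suc n) * ((real n+1)*(real n+1)) / ((real n+1)*(real n+1))"
      by (rule nonzero_mult_div_cancel_right[OF Y, symmetric])
    also have "\<dots> = (2*n+2)*(2*n+1) * real ((2*n) choose n) / ((real n+1)*(real n+1))"
      using d by (simp only: mult.assoc)
    finally show ?thesis .
  qed
  have g: "(2*x+2)*(2*x+1)*C/((x+1)*(x+1)) / (4*q) = C/q*(2*x+1)/(2*x+2)"
    if "x \<ge> 0" "q > 0" for x q C :: real
  proof -
    have d1: "(x+1)*(x+1)*(4*q) > 0" using that by (intro mult_pos_pos) auto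
    have d2: "q*(2*x+2) > 0" using that by (intro mult_pos_pos) auto
    have "(2*x+2)*(2*x+1)*C/((x+1)*(x+1)) / (4*q) = ((2*x+2)*(2*x+1)*C) / ((x+1)*(x+1)*(4*q))"
      by simp
    also have "\<dots> = (C*(2*x+1)) / (q*(2*x+2))"
      using d1 d2 by (subst frac_eq_eq) (auto simp: algebra_simps)
    also have "\<dots> = C/q*(2*x+1)/(2*x+2)" by simp
    finally show ?thesis .
  qed
  have p: "(4::real)^Suc n = 4*4^n" by simp
  show ?thesis unfolding cb_def e f p
    apply (simp only: of_nat_mult of_nat_add of_nat_numeral of_nat_1)
    by (rule g) auto
qed

lemma cb_0 [simp]: "cb 0 = 1" by (simp add: cb_def)
lemma cb_nonneg: "cb n \<ge> 0" by (simp add: cb_def)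
lemma cb_le1: "cb n \<le> 1"
proof -
  have "real ((2*n) choose n) \<le> 2^(2*n)"
    using binomial_le_pow2[of "2*n" n] by (metis of_nat_le_iff of_nat_numeral of_nat_power)
  also have "(2::real)^(2*n) = 4^n" by (simp add: power_mult)
  finally show ?thesis by (simp add: cb_def)
qed

lemma gbin_Suc: "(a::real) gchoose (Suc k) = (a gchoose k) * (a - k) / (k+1)"
proof -
  have "fact (Suc k) * (a gchoose Suc k) = (\<Prod>i = 0..<Suc k. a - of_nat i)"
    by (rule gbinomial_mult_fact)
  also have "\<dots> = (\<Prod>i = 0..<k. a - of_nat i) * (a - k)" by simp
  also have "\<dots> = fact k * (a gchoose k) * (a - k)" by (simp add: gbinomial_mult_fact)
  finally have "fact (Suc k) * (a gchoose Suc k) = fact k * (a gchoose k) * (a - k)" .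
  then have "fact k * ((k+1) * (a gchoose Suc k)) = fact k * ((a gchoose k) * (a - k))"
    by (simp add: algebra_simps)
  then have "(k+1) * (a gchoose Suc k) = (a gchoose k) * (a - k)"
    by (metis fact_nonzero mult_cancel_left)
  then show ?thesis by (simp add: field_simps)
qed

lemma gbin_half: "((-1/2::real) gchoose n) * (-1)^n = cb n"
proof (induction n)
  case 0 then show ?case by simp
next
  case (Suc n)
  have "((-1/2::real) gchoose Suc n) * (-1)^Suc n = (((-1/2::real) gchoose n) * (-1)^n) * (2*n+1)/(2*n+2)"
    by (simp add: gbin_Suc field_simps)
  also have "\<dots> = cb (Suc n)" using Suc by (simp add: cb_Suc)
  finally show ?case .
qed

lemma cb_series: assumes "\<bar>x\<bar> < 1" shows "(\<lambda>n. cb n * x^n) sums (1 / sqrt (1 - x))"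
proof -
  have "(\<lambda>n. ((-1/2::real) gchoose n) * (-x)^n) sums (1 + (-x)) powr (-1/2)"
    by (rule gen_binomial_real) (use assms in auto)
  moreover have "((-1/2::real) gchoose n) * (-x)^n = cb n * x^n" for n
    using gbin_half[of n] by (simp add: power_minus[of x] mult.assoc[symmetric])
  moreover have "(1 + (-x)) powr (-1/2) = 1 / sqrt (1 - x)"
    using assms by (simp add: powr_minus_divide powr_half_sqrt)
  ultimately show ?thesis by simp
qed

lemma gen_ident:
  fixes f f' :: "nat \<Rightarrow> real \<Rightarrow> real" and g g' :: "real \<Rightarrow> real" and M :: "nat \<Rightarrow> real"
  assumes r: "0 \<le> r"
    and df: "\<And>n x. x \<in> {0..r} \<Longrightarrow> (f n has_field_derivative f' n x) (at x within {0..r})"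
    and M: "\<And>n x. x \<in> {0..r} \<Longrightarrow> norm (f' n x) \<le> M n" "summable M"
    and f0: "\<And>n. f n 0 = 0" and g0: "g 0 = 0"
    and s': "\<And>x. x \<in> {0..r} \<Longrightarrow> (\<lambda>n. f' n x) sums g' x"
    and dg: "\<And>x. x \<in> {0..r} \<Longrightarrow> (g has_field_derivative g' x) (at x within {0..r})"
    and x: "x \<in> {0..r}"
  shows "(\<lambda>n. f n x) sums g x"
proof -
  have U: "uniform_limit {0..r} (\<lambda>n x. \<Sum>i<n. f' i x) (\<lambda>x. suminf (\<lambda>i. f' i x)) sequentially"
    by (rule Weierstrass_m_test[OF M])
  have z: "0 \<in> {0..r}" using r by simp
  have sm: "summable (\<lambda>n. f n 0)" by (simp add: f0)
  obtain G where G: "\<forall>x\<in>{0..r}. (\<lambda>n. f n x) sums G x \<and>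
      (G has_field_derivative (\<Sum>i. f' i x)) (at x within {0..r})"
    using has_field_derivative_series[OF convex_real_interval(5) df U z sm] by blast
  have "((\<lambda>x. G x - g x) has_field_derivative 0) (at x within {0..r})" if "x \<in> {0..r}" for x
  proof -
    have "(\<Sum>i. f' i x) = g' x" using s'[OF that] by (simp add: sums_iff)
    then have "((\<lambda>x. G x - g x) has_field_derivative (g' x - g' x)) (at x within {0..r})"
      using G that dg[OF that] by (metis DERIV_diff)
    then show ?thesis by simp
  qed
  then obtain c where c: "\<forall>x\<in>{0..r}. G x - g x = c"
    using has_field_derivative_zero_constant[of "{0..r}" "\<lambda>x. G x - g x"] by blast
  have "G 0 = 0" using G z f0 by (metis sums_0 sums_unique2)
  then have "c = 0" using c z g0 by (metis diff_self)
  then show ?thesis using G c x by auto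
qed

lemma abel_nonneg:
  fixes f :: "nat \<Rightarrow> real \<Rightarrow> real" and a :: "nat \<Rightarrow> real"
  assumes nn: "\<And>n x. 0 < x \<Longrightarrow> x < 1 \<Longrightarrow> 0 \<le> f n x"
    and le: "\<And>n x. 0 < x \<Longrightarrow> x < 1 \<Longrightarrow> f n x \<le> a n"
    and lim: "\<And>n. (f n \<longlongrightarrow> a n) (at_left 1)"
    and s: "\<And>x. 0 < x \<Longrightarrow> x < 1 \<Longrightarrow> (\<lambda>n. f n x) sums g x"
    and gl: "(g \<longlongrightarrow> L) (at_left 1)"
  shows "a sums L"
proof -
  have ev: "eventually (\<lambda>x. 0 < x \<and> x < 1) (at_left (1::real))"
    using eventually_at_left_real[of 0 "1::real"] by simp
  have an: "0 \<le> a n" for n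
    by (rule tendsto_le[OF trivial_limit_at_left_real lim tendsto_const])
       (use ev nn in \<open>auto elim!: eventually_mono\<close>)
  have ps: "(\<Sum>n<N. a n) \<le> L" for N
  proof (rule tendsto_le[OF trivial_limit_at_left_real gl tendsto_sum])
    show "(f n \<longlongrightarrow> a n) (at_left 1)" for n by (rule lim)
    show "\<forall>\<^sub>F x in at_left 1. (\<Sum>n<N. f n x) \<le> g x"
      using ev
    proof (rule eventually_mono)
      fix x :: real assume "0 < x \<and> x < 1"
      then show "(\<Sum>n<N. f n x) \<le> g x"
        using s[of x] nn[of x] by (metis sum_le_suminf finite_lessThan sums_iff)
    qed
  qed
  have sa: "summable a" by (rule summableI_nonneg_bounded[OF an ps])
  have u: "suminf a \<le> L" by (rule suminf_le_const[OF sa ps])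
  have l: "L \<le> suminf a"
  proof (rule tendsto_le[OF trivial_limit_at_left_real tendsto_const gl])
    show "\<forall>\<^sub>F x in at_left 1. g x \<le> suminf a"
      using ev
    proof (rule eventually_mono)
      fix x :: real assume "0 < x \<and> x < 1"
      then show "g x \<le> suminf a"
        using s[of x] le[of x] sa by (metis suminf_le sums_iff)
    qed
  qed
  show ?thesis using sa u l by (simp add: sums_iff)
qed

lemma M_geom: assumes "0 \<le> x" "x < 1" "y \<in> {0..x}" shows "norm (cb n * y^n) \<le> x^n"
proof -
  have "norm (cb n * y^n) = cb n * y^n" using assms cb_nonneg by simp
  also have "\<dots> \<le> 1 * y^n" using cb_le1 assms by (intro mult_right_mono) auto
  also have "\<dots> \<le> x^n" using assms by (simp add: power_mono)
  finally show ?thesis .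
qed

lemma S2_fun:
  assumes "0 \<le> x" "x < 1"
  shows "(\<lambda>n. cb n * x^(n+1)/(n+1)) sums (2 - 2* sqrt(1-x))"
proof (rule gen_ident[where r=x and f="\<lambda>n y. cb n * y^(n+1)/(n+1)" and g="\<lambda>y. 2 - 2 * sqrt(1-y)" and f'="\<lambda>n y. cb n * y^n" and M="\<lambda>n. x^n" and g'="\<lambda>y. 1/sqrt(1-y)"])
  show "0 \<le> x" by fact
  show "x \<in> {0..x}" using assms by simp
  show "summable (\<lambda>n. x^n)" using assms by (intro summable_geometric) simp
  show "norm (cb n * y^n) \<le> x^n" if "y \<in> {0..x}" for n y using M_geom assms that by blast
  show "cb n * 0^(n+1)/(n+1) = 0" for n by simp
  show "2 - 2 * sqrt (1 - 0) = (0::real)" by simp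
  show "(\<lambda>n. cb n * y^n) sums (1/sqrt(1-y))" if "y \<in> {0..x}" for y
    using that assms by (intro cb_series) auto
  show "((\<lambda>y. cb n * y^(n+1)/(n+1)) has_field_derivative cb n * y^n) (at y within {0..x})" for n y
  proof -
    have "((\<lambda>y. y^(n+1)) has_field_derivative real (n+1) * y^n) (at y within {0..x})"
      using DERIV_pow[of "n+1"] by simp
    then have "((\<lambda>y. cb n * y^(n+1)/(n+1)) has_field_derivative cb n * (real (n+1) * y^n)/(n+1)) (at y within {0..x})"
      by (intro DERIV_cdivide DERIV_cmult)
    then show ?thesis by (rule DERIV_cong) simp
  qed
  show "((\<lambda>y. 2 - 2* sqrt(1-y)) has_field_derivative 1/sqrt(1-y)) (at y within {0..x})" if "y \<in> {0..x}" for y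
  proof -
    have p: "1 - y > 0" using that assms by auto
    have "((\<lambda>y. 2 - 2* sqrt(1-y)) has_field_derivative 0 - 2 * (inverse (sqrt (1-y)) / 2 * (0 - 1))) (at y within {0..x})"
    proof -
      have h: "((\<lambda>y. sqrt(1-y)) has_field_derivative inverse (sqrt (1-y)) / 2 * (0 - 1)) (at y within {0..x})"
        by (rule DERIV_chain2[where g="\<lambda>y. 1-y", OF DERIV_real_sqrt[OF p]]) (intro derivative_intros)
      show ?thesis by (intro derivative_intros DERIV_cmult h)
    qed
    then show ?thesis by (rule DERIV_cong) (simp add: divide_simps)
  qed
qed

lemma S2: "(\<lambda>n. cb n / (n+1)) sums 2"
proof (rule abel_nonneg[where f="\<lambda>n x. cb n * x^(n+1)/(n+1)" and g="\<lambda>x. 2 - 2* sqrt(1-x)"])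
  show "0 \<le> cb n * x^(n+1)/(n+1)" if "0 < x" "x < 1" for n x using that cb_nonneg by simp
  show "cb n * x^(n+1)/(n+1) \<le> cb n/(n+1)" if "0 < x" "x < 1" for n x
  proof -
    have "x^(n+1) \<le> 1" using that by (intro power_le_one) auto
    then have "cb n * x^(n+1) \<le> cb n * 1" using cb_nonneg by (intro mult_left_mono) auto
    then show ?thesis by (simp add: divide_right_mono)
  qed
  show "((\<lambda>x. cb n * x^(n+1)/(n+1)) \<longlongrightarrow> cb n/(n+1)) (at_left 1)" for n
  proof -
    have "((\<lambda>x. cb n * x^(n+1)/(n+1)) \<longlongrightarrow> cb n * 1^(n+1)/(n+1)) (at_left 1)"
      by (intro tendsto_intros) auto
    then show ?thesis by simp
  qed
  show "(\<lambda>n. cb n * x^(n+1)/(n+1)) sums (2 - 2* sqrt(1-x))" if "0 < x" "x < 1" for x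
    using that by (intro S2_fun) auto
  have "((\<lambda>x. 2 - 2* sqrt(1-x)) \<longlongrightarrow> 2 - 2* sqrt(1-1)) (at_left (1::real))"
    by (intro tendsto_intros)
  then show "((\<lambda>x. 2 - 2* sqrt(1-x)) \<longlongrightarrow> 2) (at_left (1::real))" by simp
qed

lemma S1_fun:
  assumes "0 \<le> x" "x < 1"
  shows "(\<lambda>n. cb n * x^(2*n+1)/(2*n+1)) sums arcsin x"
proof (rule gen_ident[where r=x and f="\<lambda>n y. cb n * y^(2*n+1)/(2*n+1)" and g="arcsin"
      and f'="\<lambda>n y. cb n * y^(2*n)" and M="\<lambda>n. (x^2)^n" and g'="\<lambda>y. 1/sqrt(1-y^2)"])
  show "0 \<le> x" by fact
  show "x \<in> {0..x}" using assms by simp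
  show "summable (\<lambda>n. (x^2)^n)" using assms by (intro summable_geometric) (simp add: abs_square_less_1)
  show "norm (cb n * y^(2*n)) \<le> (x^2)^n" if "y \<in> {0..x}" for n y
    using M_geom[of "x^2" "y^2" n] assms that by (simp add: power_mult power_mono abs_square_less_1)
  show "cb n * 0^(2*n+1)/(2*n+1) = 0" for n by simp
  show "arcsin 0 = 0" by simp
  show "(\<lambda>n. cb n * y^(2*n)) sums (1/sqrt(1-y^2))" if "y \<in> {0..x}" for y
    using cb_series[of "y^2"] that assms by (simp add: power_mult abs_square_less_1)
  show "((\<lambda>y. cb n * y^(2*n+1)/(2*n+1)) has_field_derivative cb n * y^(2*n)) (at y within {0..x})" for n y
  proof -
    have "((\<lambda>y. y^(2*n+1)) has_field_derivative real (2*n+1) * y^(2*n)) (at y within {0..x})"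
      using DERIV_pow[of "2*n+1"] by simp
    then have "((\<lambda>y. cb n * y^(2*n+1)/(2*n+1)) has_field_derivative cb n * (real (2*n+1) * y^(2*n))/(2*n+1)) (at y within {0..x})"
      by (intro DERIV_cdivide DERIV_cmult)
    then show ?thesis by (rule DERIV_cong) simp
  qed
  show "(arcsin has_field_derivative 1/sqrt(1-y^2)) (at y within {0..x})" if "y \<in> {0..x}" for y
  proof -
    have "(arcsin has_field_derivative inverse (sqrt (1-y^2))) (at y)"
      using that assms by (intro DERIV_arcsin) auto
    then show ?thesis by (simp add: has_field_derivative_at_within divide_inverse)
  qed
qed

lemma S1: "(\<lambda>n. cb n / (2*n+1)) sums (pi/2)"
proof (rule abel_nonneg[where f="\<lambda>n x. cb n * x^(2*n+1)/(2*n+1)" and g="arcsin"])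
  show "0 \<le> cb n * x^(2*n+1)/(2*n+1)" if "0 < x" "x < 1" for n x using that cb_nonneg by simp
  show "cb n * x^(2*n+1)/(2*n+1) \<le> cb n/(2*n+1)" if "0 < x" "x < 1" for n x
  proof -
    have "x^(2*n+1) \<le> 1" using that by (intro power_le_one) auto
    then have "cb n * x^(2*n+1) \<le> cb n * 1" using cb_nonneg by (intro mult_left_mono) auto
    then show ?thesis by (simp add: divide_right_mono)
  qed
  show "((\<lambda>x. cb n * x^(2*n+1)/(2*n+1)) \<longlongrightarrow> cb n/(2*n+1)) (at_left 1)" for n
  proof -
    have "((\<lambda>x. cb n * x^(2*n+1)/(2*n+1)) \<longlongrightarrow> cb n * 1^(2*n+1)/(2*n+1)) (at_left 1)"
      by (intro tendsto_intros) auto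
    then show ?thesis by simp
  qed
  show "(\<lambda>n. cb n * x^(2*n+1)/(2*n+1)) sums arcsin x" if "0 < x" "x < 1" for x
    using that by (intro S1_fun) auto
  have "continuous_on {0..1} arcsin"
    by (rule continuous_on_subset[OF continuous_on_arcsin']) auto
  then have "(arcsin \<longlongrightarrow> arcsin 1) (at_left (1::real))"
    by (rule continuous_on_Icc_at_leftD) simp
  then show "(arcsin \<longlongrightarrow> pi/2) (at_left (1::real))" by simp
qed

lemma T_fun:
  assumes "0 \<le> x" "x < 1"
  shows "(\<lambda>n. cb n * x^(n+1)/(n+1)^2) sums (4 - 4 * ln 2 - 4 * sqrt(1-x) + 4 * ln (1 + sqrt(1-x)))"
proof (rule gen_ident[where r=x and f="\<lambda>n y. cb n * y^(n+1)/(n+1)^2"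
      and g="\<lambda>y. 4 - 4 * ln 2 - 4 * sqrt(1-y) + 4 * ln (1 + sqrt(1-y))"
      and f'="\<lambda>n y. cb n * y^n/(n+1)" and M="\<lambda>n. x^n" and g'="\<lambda>y. 2/(1+sqrt(1-y))"])
  show "0 \<le> x" by fact
  show "x \<in> {0..x}" using assms by simp
  show "summable (\<lambda>n. x^n)" using assms by (intro summable_geometric) simp
  show "norm (cb n * y^n/(n+1)) \<le> x^n" if "y \<in> {0..x}" for n y
  proof -
    have "norm (cb n * y^n/(n+1)) \<le> norm (cb n * y^n)"
    proof -
      have c: "0 \<le> cb n * y^n" using cb_nonneg[of n] that by simp
      have "cb n * y^n * 1 \<le> cb n * y^n * (1 + real n)"
        using mult_left_mono[of 1 "1+real n" "cb n * y^n"] c by simp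
      then show ?thesis using c by (simp add: divide_le_eq)
    qed
    then show ?thesis using M_geom[of x y n] assms that by linarith
  qed
  show "cb n * 0^(n+1)/(n+1)^2 = 0" for n by simp
  show "4 - 4 * ln 2 - 4 * sqrt(1-0) + 4 * ln (1 + sqrt(1-0)) = (0::real)" by simp
  show "(\<lambda>n. cb n * y^n/(n+1)) sums (2/(1+sqrt(1-y)))" if "y \<in> {0..x}" for y
  proof (cases "y = 0")
    case True
    have "(\<lambda>n. cb n * y^n/(n+1)) = (\<lambda>n. if n = 0 then 1 else 0)"
      using True by (auto simp: fun_eq_iff)
    then show ?thesis using True sums_single[of 0 "\<lambda>_. 1::real"] by simp
  next
    case False
    then have y: "0 < y" "y < 1" using that assms by auto
    have "(\<lambda>n. cb n * y^(n+1)/(n+1) / y) sums ((2 - 2 * sqrt(1-y)) / y)"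
      by (intro sums_divide S2_fun) (use y in auto)
    moreover have "cb n * y^(n+1)/(n+1) / y = cb n * y^n/(n+1)" for n
      using y by (simp add: power_Suc2)
    moreover have "(2 - 2 * sqrt(1-y)) / y = 2/(1+sqrt(1-y))"
    proof -
      have s: "sqrt(1-y)^2 = 1 - y" using y by simp
      have e: "y = (1 - sqrt(1-y)) * (1 + sqrt(1-y))" using s by (simp add: algebra_simps power2_eq_square)
      have q0: "sqrt(1-y) \<ge> 0" using y by simp
      have q: "1 + sqrt(1-y) > 0" using q0 by linarith
      have "(2 - 2 * sqrt(1-y)) / y = 2 * (1 - sqrt(1-y)) / ((1 - sqrt(1-y)) * (1 + sqrt(1-y)))"
        using e by (metis right_diff_distrib mult_2 mult_1_right)
      also have "\<dots> = ((1 - sqrt(1-y)) * 2) / ((1 - sqrt(1-y)) * (1 + sqrt(1-y)))"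
        by (simp only: mult.commute)
      also have "\<dots> = 2/(1+sqrt(1-y))"
      proof (rule mult_divide_mult_cancel_left)
        show "1 - sqrt(1-y) \<noteq> 0" using y by simp
      qed
      finally show ?thesis .
    qed
    ultimately show ?thesis by simp
  qed
  show "((\<lambda>y. cb n * y^(n+1)/(n+1)^2) has_field_derivative cb n * y^n/(n+1)) (at y within {0..x})" for n y
  proof -
    have "((\<lambda>y. y^(n+1)) has_field_derivative real (n+1) * y^n) (at y within {0..x})"
      using DERIV_pow[of "n+1"] by simp
    then have "((\<lambda>y. cb n * y^(n+1)/(n+1)^2) has_field_derivative cb n * (real (n+1) * y^n)/(n+1)^2) (at y within {0..x})"
      by (intro DERIV_cdivide DERIV_cmult)
    moreover have "cb n * (real (n+1) * y^n)/(n+1)^2 = cb n * y^n/(n+1)"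
    proof -
      have a: "real (n+1) \<noteq> 0" by simp
      have "cb n * (real (n+1) * y^n)/(real (n+1))^2 = (real (n+1) * (cb n * y^n)) / (real (n+1) * real (n+1))"
        by (simp only: power2_eq_square mult.left_commute)
      also have "\<dots> = cb n * y^n / real (n+1)" by (rule mult_divide_mult_cancel_left[OF a])
      finally show ?thesis by simp
    qed
    ultimately show ?thesis by simp
  qed
  show "((\<lambda>y. 4 - 4 * ln 2 - 4 * sqrt(1-y) + 4 * ln (1 + sqrt(1-y))) has_field_derivative 2/(1+sqrt(1-y))) (at y within {0..x})" if "y \<in> {0..x}" for y
  proof -
    have p: "1 - y > 0" using that assms by auto
    have sp: "sqrt (1-y) > 0" using p by simp
    have h: "((\<lambda>y. sqrt(1-y)) has_field_derivative inverse (sqrt (1-y)) / 2 * (0 - 1)) (at y within {0..x})"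
      by (rule DERIV_chain2[where g="\<lambda>y. 1-y", OF DERIV_real_sqrt[OF p]]) (intro derivative_intros)
    have h2: "((\<lambda>y. ln (1 + sqrt(1-y))) has_field_derivative inverse (1 + sqrt(1-y)) * (0 + inverse (sqrt (1-y)) / 2 * (0 - 1))) (at y within {0..x})"
      by (rule DERIV_chain2[where g="\<lambda>y. 1 + sqrt(1-y)", OF DERIV_ln])
         (use sp in linarith, intro DERIV_add DERIV_const h)
    have "((\<lambda>y. 4 - 4 * ln 2 - 4 * sqrt(1-y) + 4 * ln (1 + sqrt(1-y))) has_field_derivative
       0 - 0 - 4 * (inverse (sqrt (1-y)) / 2 * (0 - 1)) + 4 * (inverse (1 + sqrt(1-y)) * (0 + inverse (sqrt (1-y)) / 2 * (0 - 1)))) (at y within {0..x})"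
      by (intro derivative_intros DERIV_cmult h h2)
    then show ?thesis
    proof (rule DERIV_cong)
      have q: "1 + sqrt(1-y) > 0" using sp by linarith
      show "0 - 0 - 4 * (inverse (sqrt (1-y)) / 2 * (0 - 1)) + 4 * (inverse (1 + sqrt(1-y)) * (0 + inverse (sqrt (1-y)) / 2 * (0 - 1))) = 2/(1+sqrt(1-y))"
      proof -
        have g: "0 - 0 - 4 * (inverse s / 2 * (0 - 1)) + 4 * (inverse (1 + s) * (0 + inverse s / 2 * (0 - 1))) = 2/(1+s)"
          if "s > 0" for s :: real
        proof -
          have "1 + s > 0" using that by linarith
          have h: "s*2 + s*(s*2) > 0" using that by (intro add_pos_pos) auto
          show ?thesis using that \<open>1 + s > 0\<close> h by (simp add: field_simps)
        qed
        show ?thesis by (rule g[OF sp])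
      qed
    qed
  qed
qed

lemma T: "(\<lambda>n. cb n / (n+1)^2) sums (4 - 4 * ln 2)"
proof (rule abel_nonneg[where f="\<lambda>n x. cb n * x^(n+1)/(n+1)^2"
    and g="\<lambda>x. 4 - 4 * ln 2 - 4 * sqrt(1-x) + 4 * ln (1 + sqrt(1-x))"])
  show "0 \<le> cb n * x^(n+1)/(n+1)^2" if "0 < x" "x < 1" for n x using that cb_nonneg by simp
  show "cb n * x^(n+1)/(n+1)^2 \<le> cb n/(n+1)^2" if "0 < x" "x < 1" for n x
  proof -
    have "x^(n+1) \<le> 1" using that by (intro power_le_one) auto
    then have "cb n * x^(n+1) \<le> cb n * 1" using cb_nonneg by (intro mult_left_mono) auto
    then show ?thesis by (simp add: divide_right_mono)
  qed
  show "((\<lambda>x. cb n * x^(n+1)/(n+1)^2) \<longlongrightarrow> cb n/(n+1)^2) (at_left 1)" for n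
  proof -
    have "((\<lambda>x. cb n * x^(n+1)/(n+1)^2) \<longlongrightarrow> cb n * 1^(n+1)/(n+1)^2) (at_left 1)"
      by (intro tendsto_intros) auto
    then show ?thesis by simp
  qed
  show "(\<lambda>n. cb n * x^(n+1)/(n+1)^2) sums (4 - 4 * ln 2 - 4 * sqrt(1-x) + 4 * ln (1 + sqrt(1-x)))"
    if "0 < x" "x < 1" for x
    using that by (intro T_fun) auto
  have "((\<lambda>x. 4 - 4 * ln 2 - 4 * sqrt(1-x) + 4 * ln (1 + sqrt(1-x))) \<longlongrightarrow>
        4 - 4 * ln 2 - 4 * sqrt(1-1) + 4 * ln (1 + sqrt(1-1))) (at_left (1::real))"
    by (intro tendsto_intros) auto
  then show "((\<lambda>x. 4 - 4 * ln 2 - 4 * sqrt(1-x) + 4 * ln (1 + sqrt(1-x))) \<longlongrightarrow> 4 - 4 * ln 2) (at_left (1::real))"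
    by simp
qed

lemma pf_aux: "(a::real) \<noteq> 0 \<Longrightarrow> b \<noteq> 0 \<Longrightarrow> a = 2*b - 1 \<Longrightarrow> 4*(u/a) - 2*(u/b) - u/b^2 = u/(a*b^2)"
  apply (simp add: field_simps power2_eq_square)
  by algebra

theorem mainTheorem7:
  shows "(\<lambda>n::nat. real ((2*n) choose n) / ((2 * real n + 1) * (real n + 1)^2 * 2^(2*n)))
           sums (2 * pi + 4 * ln 2 - 8)"
proof -
  have "(\<lambda>n. 4 * (cb n / (2*n+1)) - 2 * (cb n / (n+1)) - cb n / (n+1)^2) sums (4 * (pi/2) - 2 * 2 - (4 - 4 * ln 2))"
    by (intro sums_diff sums_mult S1 S2 T)
  moreover have "4 * (cb n / (2*n+1)) - 2 * (cb n / (n+1)) - cb n / (n+1)^2 =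
      real ((2*n) choose n) / ((2 * real n + 1) * (real n + 1)^2 * 2^(2*n))" for n
  proof -
    have g: "4 * (C/q / (2*x+1)) - 2 * (C/q / (x+1)) - C/q / (x+1)^2 = C / ((2*x+1) * (x+1)^2 * q)"
      if "x \<ge> 0" "q > 0" for x q C :: real
    proof -
      have "2*x+1 \<noteq> 0" "x+1 \<noteq> 0" using that by auto
      then have "4 * (C/q / (2*x+1)) - 2 * (C/q / (x+1)) - C/q / (x+1)^2 = (C/q) / ((2*x+1) * (x+1)^2)"
        by (intro pf_aux) auto
      then show ?thesis by simp
    qed
    have p: "(2::real)^(2*n) = 4^n" by (simp add: power_mult)
    show ?thesis unfolding cb_def p
      apply (simp only: of_nat_add of_nat_mult of_nat_numeral of_nat_1 of_nat_power)
      by (rule g) auto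
  qed
  ultimately show ?thesis by simp
qed

end
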